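(* Let $\lambda,\mu\ge0$ with $\lambda\mu\neq1$, $a=1+\lambda^2$, $b=1+\mu^2$, and let $$D_w(p)=(1-\lambda^2p^2)(1-\mu^2p^2)-(\lambda^2-p^2)(\mu^2-p^2)p^{2w}.$$ Then for all $w$ sufficiently large and all integers $n\ge0$, $$Z_{n,w}(a,b)=\frac{1+\lambda^2}{4}\sum_{p_k}\frac{(1-p_k^2)^2}{(\lambda^2-p_k^2)(1-\lambda^2p_k^2)}\left(\frac{1+p_k^2}{p_k}\right)^n\frac{1}{w+\varepsilon_k},$$ where the sum runs over the zeros $p_k$ of $D_w$ with $p_k\neq\pm1$, and $$\varepsilon_k=p_k^2\left[\frac{\lambda^2}{1-\lambda^2p_k^2}-\frac{1}{\lambda^2-p_k^2}+\frac{\mu^2}{1-\mu^2p_k^2}-\frac{1}{\mu^2-p_k^2}\right].$$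
   Context: A loop of length $n$ in the slit of width $w$ is a lattice path in $\mathbb{Z}^2$ with $n$ steps, each equal to $(1,1)$ or $(1,-1)$, starting at $(0,0)$ and ending at $(n,0)$, all of whose vertices $(x,y)$ satisfy $0\le y\le w$. For such a path $P$, let $u(P)$ be the number of its vertices on the line $y=0$ excluding the initial vertex, and $v(P)$ the number of its vertices on the line $y=w$. The partition function is $Z_{n,w}(a,b)=\sum_P a^{u(P)}b^{v(P)}$, the sum over all loops of length $n$ in the slit of width $w$. *)

theory Defs
  imports Complex_Main
begin

text \<open>A path of length n is encoded by its list of steps (each 1 or -1);
  the vertex number i (0 \<le> i \<le> n) is (i, height s i).\<close>
definition height :: "int list \<Rightarrow> nat \<Rightarrow> int" where
  "height s i = sum_list (take i s)"

definition loops :: "nat \<Rightarrow> nat \<Rightarrow> int list set" where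
  "loops n w = {s. length s = n \<and> set s \<subseteq> {1, -1} \<and> height s n = 0 \<and>
                   (\<forall>i\<le>n. 0 \<le> height s i \<and> height s i \<le> int w)}"

definition u_count :: "nat \<Rightarrow> int list \<Rightarrow> nat" where
  "u_count n s = card {i \<in> {1..n}. height s i = 0}"

definition v_count :: "nat \<Rightarrow> nat \<Rightarrow> int list \<Rightarrow> nat" where
  "v_count n w s = card {i \<in> {0..n}. height s i = int w}"

definition Zpf :: "nat \<Rightarrow> nat \<Rightarrow> real \<Rightarrow> real \<Rightarrow> real" where
  "Zpf n w a b = (\<Sum>s\<in>loops n w. a ^ u_count n s * b ^ v_count n w s)"

definition Dw :: "real \<Rightarrow> real \<Rightarrow> nat \<Rightarrow> complex \<Rightarrow> complex" where
  "Dw l m w p = (1 - (of_real l)^2 * p^2) * (1 - (of_real m)^2 * p^2)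
               - ((of_real l)^2 - p^2) * ((of_real m)^2 - p^2) * p ^ (2*w)"

definition epsk :: "real \<Rightarrow> real \<Rightarrow> complex \<Rightarrow> complex" where
  "epsk l m p = p^2 * ((of_real l)^2 / (1 - (of_real l)^2 * p^2) - 1 / ((of_real l)^2 - p^2)
                     + (of_real m)^2 / (1 - (of_real m)^2 * p^2) - 1 / ((of_real m)^2 - p^2))"

end

theory Submission
  imports Defs "HOL-Computational_Algebra.Fundamental_Theorem_Algebra"
begin


lemma lagrange_sum:
  fixes S :: "complex set"
  assumes fin: "finite S" and k: "k < card S"
  shows "(\<Sum>z\<in>S. z^k / (\<Prod>y\<in>S-{z}. (z - y))) = (if k = card S - 1 then 1 else 0)"
proof -
  define c where "c z = z^k / (\<Prod>y\<in>S-{z}. (z - y))" for z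
  define I where "I = (\<Sum>z\<in>S. smult (c z) (\<Prod>y\<in>S-{z}. [:-y,1:]))"
  have degP: "degree (\<Prod>y\<in>S-{z}. [:-y,1:]) = card S - 1" if "z \<in> S" for z
  proof -
    have "degree (\<Prod>y\<in>S-{z}. [:-y,1:]) = (\<Sum>y\<in>S-{z}. degree [:-y,(1::complex):])"
      by (rule degree_prod_sum_eq) auto
    also have "\<dots> = card (S - {z})" by simp
    finally show ?thesis using that fin by simp
  qed
  have lcP: "lead_coeff (\<Prod>y\<in>S-{z}. [:-y,1:]) = (1::complex)" for z
    by (simp add: lead_coeff_prod)
  have degI: "degree I \<le> card S - 1"
    unfolding I_def by (rule degree_sum_le) (use fin in \<open>auto intro: order.trans[OF degree_smult_le] simp: degP\<close>)
  have polyI: "poly I t = t^k" if t: "t \<in> S" for t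
  proof -
    have "poly I t = (\<Sum>z\<in>S. c z * (\<Prod>y\<in>S-{z}. (t - y)))"
      by (simp add: I_def poly_sum poly_prod)
    also have "\<dots> = c t * (\<Prod>y\<in>S-{t}. (t - y))"
    proof (rule sum.remove[OF fin t, THEN trans])
      have "(\<Sum>z\<in>S-{t}. c z * (\<Prod>y\<in>S-{z}. (t - y))) = 0"
      proof (rule sum.neutral, intro ballI)
        fix z assume "z \<in> S - {t}"
        then have "t \<in> S - {z}" using t by auto
        then have "(\<Prod>y\<in>S-{z}. (t - y)) = 0"
          using fin by (intro prod_zero) auto
        then show "c z * (\<Prod>y\<in>S-{z}. (t - y)) = 0" by simp
      qed
      then show "c t * (\<Prod>y\<in>S-{t}. (t - y)) + (\<Sum>z\<in>S-{t}. c z * (\<Prod>y\<in>S-{z}. (t - y))) =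
          c t * (\<Prod>y\<in>S-{t}. (t - y))" by simp
    qed
    also have "\<dots> = t^k"
    proof -
      have "(\<Prod>y\<in>S-{t}. (t - y)) \<noteq> 0" using fin by (subst prod_zero_iff) auto
      then show ?thesis by (simp add: c_def)
    qed
    finally show ?thesis .
  qed
  have "I = monom 1 k"
  proof (rule poly_eqI_degree[of S])
    show "\<And>x. x \<in> S \<Longrightarrow> poly I x = poly (monom 1 k) x" using polyI by (simp add: poly_monom)
    show "degree I < card S" using degI k by linarith
    show "degree (monom (1::complex) k) < card S" using k by (simp add: degree_monom_eq)
  qed
  then have "coeff I (card S - 1) = coeff (monom 1 k) (card S - 1)" by simp
  moreover have "coeff I (card S - 1) = (\<Sum>z\<in>S. c z)"
    unfolding I_def coeff_sum coeff_smult
  proof (rule sum.cong[OF refl])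
    fix z assume "z \<in> S"
    then have "coeff (\<Prod>y\<in>S-{z}. [:-y,1:]) (card S - 1) = 1"
      using degP[of z] lcP[of z] by simp
    then show "c z * coeff (\<Prod>y\<in>S-{z}. [:-y,1:]) (card S - 1) = c z" by simp
  qed
  ultimately show ?thesis by (simp add: c_def coeff_monom)
qed

lemma decomp_info:
  fixes D :: "complex poly"
  assumes sq: "rsquarefree D"
  defines "R \<equiv> {z. poly D z = 0}"
  shows "finite R" "card R = degree D" "D \<noteq> 0"
    "\<And>z. z \<in> R \<Longrightarrow> poly (pderiv D) z = lead_coeff D * (\<Prod>y\<in>R-{z}. (z - y))"
    "poly D x = lead_coeff D * (\<Prod>y\<in>R. (x - y))"
proof -
  show D0: "D \<noteq> 0" using sq by (simp add: rsquarefree_def)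
  show fin: "finite R" unfolding R_def using D0 by (rule poly_roots_finite)
  have dec: "smult (lead_coeff D) (\<Prod>z\<in>R. [:-z, 1:]) = D"
    unfolding R_def by (rule complex_poly_decompose_rsquarefree[OF sq])
  have "degree D = degree (\<Prod>z\<in>R. [:-z, 1:])"
    by (subst dec[symmetric]) (simp add: D0)
  also have "\<dots> = (\<Sum>z\<in>R. degree [:-z, (1::complex):])"
    by (rule degree_prod_sum_eq) auto
  also have "\<dots> = card R" by simp
  finally show "card R = degree D" by simp
  show "poly D x = lead_coeff D * (\<Prod>y\<in>R. (x - y))"
    by (subst dec[symmetric]) (simp add: poly_prod)
  fix z assume z: "z \<in> R"
  have "pderiv D = smult (lead_coeff D) (\<Sum>a\<in>R. (\<Prod>y\<in>R-{a}. [:-y,1:]))"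
    by (subst dec[symmetric]) (simp add: pderiv_smult pderiv_prod pderiv_pCons)
  then have "poly (pderiv D) z = lead_coeff D * (\<Sum>a\<in>R. (\<Prod>y\<in>R-{a}. (z - y)))"
    by (simp add: poly_sum poly_prod)
  also have "(\<Sum>a\<in>R. (\<Prod>y\<in>R-{a}. (z - y))) = (\<Prod>y\<in>R-{z}. (z - y))"
  proof (rule sum.remove[OF fin z, THEN trans])
    have "(\<Sum>a\<in>R-{z}. (\<Prod>y\<in>R-{a}. (z - y))) = 0"
      using fin z by (intro sum.neutral ballI prod_zero) auto
    then show "(\<Prod>y\<in>R-{z}. (z - y)) + (\<Sum>a\<in>R-{z}. (\<Prod>y\<in>R-{a}. (z - y))) = (\<Prod>y\<in>R-{z}. (z - y))"
      by simp
  qed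
  finally show "poly (pderiv D) z = lead_coeff D * (\<Prod>y\<in>R-{z}. (z - y))" .
qed

lemma root_sum_monom:
  fixes D :: "complex poly"
  assumes sq: "rsquarefree D" and e: "e < degree D"
  shows "(\<Sum>z\<in>{z. poly D z = 0}. z^e / poly (pderiv D) z) = (if e = degree D - 1 then 1 / lead_coeff D else 0)"
proof -
  let ?R = "{z. poly D z = 0}"
  note I = decomp_info[OF sq]
  have lc: "lead_coeff D \<noteq> 0" using I(3) by simp
  have "(\<Sum>z\<in>?R. z^e / poly (pderiv D) z) = (\<Sum>z\<in>?R. z^e / (\<Prod>y\<in>?R-{z}. (z - y))) / lead_coeff D"
    by (simp add: I(4) sum_divide_distrib mult_ac)
  also have "\<dots> = (if e = degree D - 1 then 1 else 0) / lead_coeff D"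
    using lagrange_sum[OF I(1), of e] e I(2) by simp
  finally show ?thesis by simp
qed

lemma root_sum_inv:
  fixes D :: "complex poly"
  assumes sq: "rsquarefree D" and d: "degree D \<ge> 1" and D0: "poly D 0 \<noteq> 0"
  shows "(\<Sum>z\<in>{z. poly D z = 0}. 1 / (z * poly (pderiv D) z)) = - 1 / poly D 0"
proof -
  define R where "R = {z. poly D z = 0}"
  note I = decomp_info[OF sq, folded R_def]
  have lc: "lead_coeff D \<noteq> 0" using I(3) by simp
  have 0: "0 \<notin> R" using D0 by (simp add: R_def)
  have "(\<Sum>z\<in>insert 0 R. z^0 / (\<Prod>y\<in>insert 0 R-{z}. (z - y))) = 0"
    using lagrange_sum[of "insert 0 R" 0] I(1,2) 0 d by simp
  also have "(\<Sum>z\<in>insert 0 R. z^0 / (\<Prod>y\<in>insert 0 R-{z}. (z - y))) =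
     1 / (\<Prod>y\<in>R. (0 - y)) + (\<Sum>z\<in>R. 1 / (z * (\<Prod>y\<in>R-{z}. (z - y))))"
  proof -
    have "insert 0 R - {0} = R" using 0 by auto
    moreover have "(\<Prod>y\<in>insert 0 R-{z}. (z - y)) = z * (\<Prod>y\<in>R-{z}. (z - y))" if "z \<in> R" for z
    proof -
      have "insert 0 R - {z} = insert 0 (R - {z})" using that 0 by auto
      then show ?thesis using I(1) 0 by simp
    qed
    ultimately show ?thesis using I(1) 0 by (simp add: sum.insert)
  qed
  finally have eq: "(\<Sum>z\<in>R. 1 / (z * (\<Prod>y\<in>R-{z}. (z - y)))) = - 1 / (\<Prod>y\<in>R. (0 - y))"
    by (simp add: eq_neg_iff_add_eq_0 add.commute)
  have "(\<Sum>z\<in>R. 1 / (z * poly (pderiv D) z)) = (\<Sum>z\<in>R. 1 / (z * (\<Prod>y\<in>R-{z}. (z - y)))) / lead_coeff D"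
    by (simp add: I(4) sum_divide_distrib mult_ac)
  also have "\<dots> = - 1 / poly D 0" using eq by (simp add: I(5)[of 0])
  finally show ?thesis by (simp add: R_def)
qed


definition Dpoly :: "complex \<Rightarrow> complex \<Rightarrow> nat \<Rightarrow> complex poly" where
  "Dpoly L M w = [:1, 0, -(L+M), 0, L*M:] - monom 1 (2*w) * [:L*M, 0, -(L+M), 0, 1:]"

definition Dd :: "complex \<Rightarrow> complex \<Rightarrow> nat \<Rightarrow> complex \<Rightarrow> complex" where
  "Dd L M w p = -2*L*p*(1-M*p^2) - 2*M*p*(1-L*p^2) + 2*p*((M-p^2)+(L-p^2))*p^(2*w)
     - of_nat (2*w)*(L-p^2)*(M-p^2)*p^(2*w-1)"

definition psi :: "complex \<Rightarrow> nat \<Rightarrow> complex \<Rightarrow> nat \<Rightarrow> complex" where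
  "psi M w p h = (M - p^2)*p^(2*w-h) + (1 - M*p^2)*p^h"

definition om :: "complex \<Rightarrow> complex \<Rightarrow> nat \<Rightarrow> nat \<Rightarrow> complex" where
  "om L M w h = (if h = 0 then 1 + L else if h = w then 1 + M else 1)"

lemma poly_Dpoly: "poly (Dpoly L M w) p = (1 - L*p^2)*(1 - M*p^2) - (L - p^2)*(M - p^2)*p^(2*w)"
  by (simp add: Dpoly_def poly_monom algebra_simps power2_eq_square)

lemma coeff_Dpoly: "coeff (Dpoly L M w) k = coeff [:1, 0, -(L+M), 0, L*M:] k -
    (if k < 2*w then 0 else coeff [:L*M, 0, -(L+M), 0, 1:] (k - 2*w))"
  unfolding Dpoly_def coeff_diff coeff_monom_mult mult_1 by (rule refl)

lemma degree_Dpoly: assumes "w \<ge> 1" shows "degree (Dpoly L M w) = 2*w+4"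
  and "lead_coeff (Dpoly L M w) = -1"
proof -
  have c: "coeff (Dpoly L M w) (2*w+4) = -1"
    using assms by (simp add: coeff_Dpoly coeff_pCons split: nat.split)
  have "degree (Dpoly L M w) \<le> 2*w+4"
  proof (rule degree_le, intro allI impI)
    fix i assume i: "2*w+4 < i"
    define j where "j = i - 2*w - 5"
    have j: "i - 2*w = Suc (Suc (Suc (Suc (Suc j))))" using i unfolding j_def by arith
    have i2: "i = Suc (Suc (Suc (Suc (Suc (j + 2*w)))))" using j i by linarith
    show "coeff (Dpoly L M w) i = 0"
      using i j by (simp add: coeff_Dpoly i2 coeff_pCons)
  qed
  moreover have "2*w+4 \<le> degree (Dpoly L M w)" using c by (intro le_degree) simp
  ultimately show d: "degree (Dpoly L M w) = 2*w+4" by simp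
  show "lead_coeff (Dpoly L M w) = -1" using c d by simp
qed

lemma poly_pderiv_Dpoly: assumes "w \<ge> 1" shows "poly (pderiv (Dpoly L M w)) p = Dd L M w p"
proof -
  have "DERIV (\<lambda>p. poly (Dpoly L M w) p) p :> poly (pderiv (Dpoly L M w)) p" by (rule poly_DERIV)
  moreover have "DERIV (\<lambda>p. poly (Dpoly L M w) p) p :> Dd L M w p"
  proof -
    obtain k where k: "w = Suc k" using assms by (cases w) auto
    have e: "p^(2*w) = p * p^(2*w-1)" by (simp add: k)
    show ?thesis
    unfolding poly_Dpoly
    apply (rule derivative_eq_intros refl)+
    apply (simp add: Dd_def e algebra_simps power2_eq_square)
    done
  qed
  ultimately show ?thesis by (rule DERIV_unique)
qed


lemma divhelp: "(1+p^2) * X = p * Y \<Longrightarrow> (p::complex) \<noteq> 0 \<Longrightarrow> (1+p^2)/p * X = Y"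
  by (simp add: field_simps)

lemma eigen:
  assumes D: "poly (Dpoly L M w) p = 0" and p: "p \<noteq> 0" and w: "w \<ge> 2" and h: "h \<le> w"
  shows "(1+p^2)/p * psi M w p h = om L M w h *
     ((if 0<h then psi M w p (h-1) else 0) + (if h<w then psi M w p (h+1) else 0))"
proof -
  consider "h = 0" | "h = w" | "0 < h" "h < w" using h by linarith
  then show ?thesis
  proof cases
    case 1
    define q where "q = p^(2*w-1)"
    have e: "p^(2*w) = p*q" unfolding q_def using w
      by (metis Suc_diff_1 less_le_trans mult_pos_pos pos2 power_Suc zero_less_numeral)
    have D': "(1 - L*p^2)*(1 - M*p^2) - (L - p^2)*(M - p^2)*(p*q) = 0"
      using D by (simp add: poly_Dpoly e)
    have g: "(1+p^2) * ((M - p^2)*(p*q) + (1 - M*p^2)) = p * ((1+L)*((M-p^2)*q + (1-M*p^2)*p))"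
      using D' by algebra
    have "psi M w p h = (M - p^2)*(p*q) + (1 - M*p^2)" using 1 by (simp add: psi_def e)
    moreover have "psi M w p (h+1) = (M-p^2)*q + (1-M*p^2)*p" using 1 by (simp add: psi_def q_def)
    moreover have "om L M w h = 1+L" using 1 by (simp add: om_def)
    ultimately show ?thesis using 1 w divhelp[OF g p] by simp
  next
    case 2
    obtain k where k: "w = Suc k" using w by (cases w) auto
    have e1: "2*w - h = Suc k" "2*w - (h-1) = Suc (Suc k)" "h - 1 = k" "h = Suc k" using 2 k by auto
    have g: "(1+p^2) * ((M - p^2)*p^(Suc k) + (1 - M*p^2)*p^(Suc k)) =
       p * ((1+M)*((M - p^2)*p^(Suc (Suc k)) + (1 - M*p^2)*p^k))"
      by (simp add: algebra_simps power2_eq_square)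
    have "psi M w p h = (M - p^2)*p^(Suc k) + (1 - M*p^2)*p^(Suc k)" using e1 by (simp add: psi_def)
    moreover have "psi M w p (h-1) = (M - p^2)*p^(Suc (Suc k)) + (1 - M*p^2)*p^k" using e1 by (simp add: psi_def)
    moreover have "om L M w h = 1+M" using 2 w by (simp add: om_def)
    ultimately show ?thesis using 2 w divhelp[OF g p] by simp
  next
    case 3
    obtain k where k: "h = Suc k" using 3 by (cases h) auto
    obtain j where j: "2*w - h = Suc j" using 3 by (intro that[of "2*w-h-1"]) arith
    have e1: "2*w - (h-1) = Suc (Suc j)" "2*w - (h+1) = j" "h - 1 = k" "h+1 = Suc (Suc k)"
      using j k 3 by auto
    have g: "(1+p^2) * ((M - p^2)*p^(Suc j) + (1 - M*p^2)*p^(Suc k)) =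
       p * (((M - p^2)*p^(Suc (Suc j)) + (1 - M*p^2)*p^k) + ((M - p^2)*p^j + (1 - M*p^2)*p^(Suc (Suc k))))"
      by (simp add: algebra_simps power2_eq_square)
    have "psi M w p h = (M - p^2)*p^(Suc j) + (1 - M*p^2)*p^(Suc k)" using j k by (simp add: psi_def)
    moreover have "psi M w p (h-1) = (M - p^2)*p^(Suc (Suc j)) + (1 - M*p^2)*p^k" using e1 by (simp add: psi_def)
    moreover have "psi M w p (h+1) = (M - p^2)*p^j + (1 - M*p^2)*p^(Suc (Suc k))" using e1 by (simp add: psi_def)
    moreover have "om L M w h = 1" using 3 by (simp add: om_def)
    ultimately show ?thesis using 3 w divhelp[OF g p] by simp
  qed
qed

definition Hs :: "complex \<Rightarrow> complex \<Rightarrow> nat \<Rightarrow> nat \<Rightarrow> nat \<Rightarrow> complex" where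
  "Hs L M w n h = (\<Sum>p\<in>{p. poly (Dpoly L M w) p = 0}.
      -(1/2)*(1-p^2)*psi M w p h*((1+p^2)/p)^n/(p*Dd L M w p))"

lemma Dpoly0: "w \<ge> 1 \<Longrightarrow> poly (Dpoly L M w) 0 = 1" by (simp add: poly_Dpoly)

lemma Hs_step:
  assumes w: "w \<ge> 2" and h: "h \<le> w"
  shows "Hs L M w (Suc n) h = om L M w h *
     ((if 0<h then Hs L M w n (h-1) else 0) + (if h<w then Hs L M w n (h+1) else 0))"
proof -
  define R where "R = {p. poly (Dpoly L M w) p = 0}"
  define K where "K p = -(1/2)*(1-p^2)*((1+p^2)/p)^n/(p*Dd L M w p)" for p
  define T where "T X p = X * K p" for X p
  have "Hs L M w (Suc n) h = (\<Sum>p\<in>R. T ((1+p^2)/p * psi M w p h) p)"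
    unfolding Hs_def R_def T_def K_def by (intro sum.cong refl) (simp add: mult_ac)
  also have "\<dots> = (\<Sum>p\<in>R. om L M w h * ((if 0<h then T (psi M w p (h-1)) p else 0)
                   + (if h<w then T (psi M w p (h+1)) p else 0)))"
  proof (intro sum.cong refl)
    fix p assume "p \<in> R"
    then have D: "poly (Dpoly L M w) p = 0" and p: "p \<noteq> 0" using Dpoly0[of w L M] w by (auto simp: R_def)
    show "T ((1+p^2)/p * psi M w p h) p = om L M w h * ((if 0<h then T (psi M w p (h-1)) p else 0)
                   + (if h<w then T (psi M w p (h+1)) p else 0))"
      unfolding eigen[OF D p w h] by (simp add: T_def algebra_simps)
  qed
  also have "\<dots> = om L M w h * ((if 0<h then Hs L M w n (h-1) else 0) + (if h<w then Hs L M w n (h+1) else 0))"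
  proof -
    have e: "(\<Sum>p\<in>R. T (psi M w p i) p) = Hs L M w n i" for i
      unfolding Hs_def R_def T_def K_def by (intro sum.cong refl) (simp add: mult_ac)
    show ?thesis
    proof -
      have c: "(\<Sum>p\<in>R. (if c then T (psi M w p i) p else 0)) = (if c then Hs L M w n i else 0)" for c i
        by (cases c) (simp_all add: e)
      show ?thesis by (simp only: sum_distrib_left[symmetric] sum.distrib c)
    qed
  qed
  finally show ?thesis .
qed

lemma lin6: "(\<Sum>p\<in>R. -(1/2)*((a1::complex)*f1 p - a2*f2 p + f3 p + f4 p - a5*f5 p + a6*f6 p)) =
  -(1/2)*(a1*(\<Sum>p\<in>R. f1 p) - a2*(\<Sum>p\<in>R. f2 p) + (\<Sum>p\<in>R. f3 p) + (\<Sum>p\<in>R. f4 p)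
      - a5*(\<Sum>p\<in>R. f5 p) + a6*(\<Sum>p\<in>R. f6 p))"
  unfolding sum_distrib_left[symmetric] by (simp add: sum.distrib sum_subtractf sum_distrib_left)

lemma Hs_base:
  assumes sq: "rsquarefree (Dpoly L M w)" and w: "w \<ge> 1" and h: "h \<le> w"
  shows "Hs L M w 0 h = (if h = 0 then 1 else 0)"
proof -
  define R where "R = {p. poly (Dpoly L M w) p = 0}"
  define S where "S e = (\<Sum>p\<in>R. p^e / Dd L M w p)" for e
  have S: "S e = (if e = 2*w+3 then -1 else 0)" if "e < 2*w+4" for e
    using root_sum_monom[OF sq, of e] that degree_Dpoly[OF w]
    by (simp add: S_def R_def poly_pderiv_Dpoly[OF w])
  have Sinv: "(\<Sum>p\<in>R. 1 / (p * Dd L M w p)) = -1"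
    using root_sum_inv[OF sq] degree_Dpoly[OF w] Dpoly0[OF w, of L M]
    by (simp add: R_def poly_pderiv_Dpoly[OF w])
  have p0: "p \<in> R \<Longrightarrow> p \<noteq> 0" for p using Dpoly0[OF w, of L M] by (auto simp: R_def)
  have d0: "p \<in> R \<Longrightarrow> Dd L M w p \<noteq> 0" for p using sq unfolding rsquarefree_roots
    by (auto simp: R_def poly_pderiv_Dpoly[OF w])
  show ?thesis
  proof (cases "h = 0")
    case True
    obtain e where e: "2*w = Suc e" using w by (intro that[of "2*w-1"]) arith
    have "Hs L M w 0 h = (\<Sum>p\<in>R. -(1/2)*(M*(p^e/Dd L M w p) - (1+M)*(p^(e+2)/Dd L M w p)
        + p^(e+4)/Dd L M w p + 1/(p*Dd L M w p) - (1+M)*(p^1/Dd L M w p) + M*(p^3/Dd L M w p)))"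
      unfolding Hs_def R_def[symmetric]
    proof (intro sum.cong refl)
      fix p assume "p \<in> R"
      then have p: "p \<noteq> 0" and d: "Dd L M w p \<noteq> 0" by (rule p0, rule d0)
      have key: "(1-p^2)*psi M w p h = p*(M*p^e - (1+M)*p^(e+2) + p^(e+4) - (1+M)*p^1 + M*p^3) + 1"
      proof -
        have pe: "p^(2*w) = p*p^e" "p^(w*2) = p*p^e" "p^w*p^w = p*p^e" using e by (simp_all add: mult.commute flip: power_add mult_2)
        show ?thesis using True by (simp add: psi_def pe algebra_simps power2_eq_square power_add eval_nat_numeral)
      qed
      show "-(1/2)*(1-p^2)*psi M w p h*((1+p^2)/p)^0/(p*Dd L M w p) = -(1/2)*(M*(p^e/Dd L M w p) - (1+M)*(p^(e+2)/Dd L M w p)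
        + p^(e+4)/Dd L M w p + 1/(p*Dd L M w p) - (1+M)*(p^1/Dd L M w p) + M*(p^3/Dd L M w p))"
      proof -
        have "-(1/2)*(1-p^2)*psi M w p h*((1+p^2)/p)^0/(p*Dd L M w p) = -(1/2)*(((1-p^2)*psi M w p h)/(p*Dd L M w p))"
          by simp
        also have "\<dots> = -(1/2)*((p*(M*p^e - (1+M)*p^(e+2) + p^(e+4) - (1+M)*p^1 + M*p^3) + 1)/(p*Dd L M w p))"
          by (simp only: key)
        also have "\<dots> = -(1/2)*(M*(p^e/Dd L M w p) - (1+M)*(p^(e+2)/Dd L M w p)
        + p^(e+4)/Dd L M w p + 1/(p*Dd L M w p) - (1+M)*(p^1/Dd L M w p) + M*(p^3/Dd L M w p))"
          using p d by (simp add: field_simps)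
        finally show ?thesis .
      qed
    qed
    also have "\<dots> = -(1/2)*(M*S e - (1+M)*S (e+2) + S (e+4) + (\<Sum>p\<in>R. 1/(p*Dd L M w p)) - (1+M)*S 1 + M*S 3)"
      unfolding S_def by (rule lin6)
    also have "\<dots> = 1" using e w by (simp add: S Sinv)
    finally show ?thesis using True by simp
  next
    case False
    obtain k where k: "h = Suc k" using False by (cases h) auto
    obtain j where j: "2*w - h = Suc j" using h w by (intro that[of "2*w-h-1"]) arith
    have "Hs L M w 0 h = (\<Sum>p\<in>R. -(1/2)*(M*(p^j/Dd L M w p) - (1+M)*(p^(j+2)/Dd L M w p)
        + p^(j+4)/Dd L M w p + p^k/Dd L M w p - (1+M)*(p^(k+2)/Dd L M w p) + M*(p^(k+4)/Dd L M w p)))"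
      unfolding Hs_def R_def[symmetric]
    proof (intro sum.cong refl)
      fix p assume "p \<in> R"
      then have p: "p \<noteq> 0" and d: "Dd L M w p \<noteq> 0" by (rule p0, rule d0)
      have key: "(1-p^2)*psi M w p h = p*(M*p^j - (1+M)*p^(j+2) + p^(j+4) + p^k - (1+M)*p^(k+2) + M*p^(k+4))"
      proof -
        have pe: "p^(2*w-h) = p*p^j" "p^(w*2 - Suc k) = p*p^j" "p^(w+w - Suc k) = p*p^j" using j k by (simp_all add: mult.commute mult_2[symmetric])
        show ?thesis by (simp add: psi_def pe k algebra_simps power2_eq_square power_add eval_nat_numeral)
      qed
      show "-(1/2)*(1-p^2)*psi M w p h*((1+p^2)/p)^0/(p*Dd L M w p) = -(1/2)*(M*(p^j/Dd L M w p) - (1+M)*(p^(j+2)/Dd L M w p)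
        + p^(j+4)/Dd L M w p + p^k/Dd L M w p - (1+M)*(p^(k+2)/Dd L M w p) + M*(p^(k+4)/Dd L M w p))"
      proof -
        have "-(1/2)*(1-p^2)*psi M w p h*((1+p^2)/p)^0/(p*Dd L M w p) = -(1/2)*(((1-p^2)*psi M w p h)/(p*Dd L M w p))"
          by simp
        also have "\<dots> = -(1/2)*((p*(M*p^j - (1+M)*p^(j+2) + p^(j+4) + p^k - (1+M)*p^(k+2) + M*p^(k+4)))/(p*Dd L M w p))"
          by (simp only: key)
        also have "\<dots> = -(1/2)*(M*(p^j/Dd L M w p) - (1+M)*(p^(j+2)/Dd L M w p)
        + p^(j+4)/Dd L M w p + p^k/Dd L M w p - (1+M)*(p^(k+2)/Dd L M w p) + M*(p^(k+4)/Dd L M w p))"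
          using p d by (simp add: field_simps)
        finally show ?thesis .
      qed
    qed
    also have "\<dots> = -(1/2)*(M*S j - (1+M)*S (j+2) + S (j+4) + S k - (1+M)*S (k+2) + M*S (k+4))"
      unfolding S_def by (rule lin6)
    also have "\<dots> = 0"
    proof -
      have z: "S i = 0" if "i < 2*w+3" for i using S[of i] that by simp
      have "j+4 < 2*w+3" "k+4 < 2*w+3" using j k h w by arith+
      then show ?thesis by (simp add: z)
    qed
    finally show ?thesis using False by simp
  qed
qed


lemma psi_sq:
  assumes "h \<le> w"
  shows "(psi M w p h)^2 = (M-p^2)^2*p^(2*w)*(p^2)^(w-h) + 2*(M-p^2)*(1-M*p^2)*p^(2*w) + (1-M*p^2)^2*(p^2)^h"
proof -
  have e1: "(p^(2*w-h))^2 = p^(2*w)*(p^2)^(w-h)"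
    using assms by (simp add: power_mult[symmetric] power_add[symmetric]) (simp add: algebra_simps)
  have e2: "p^(2*w-h)*p^h = p^(2*w)" using assms by (simp add: power_add[symmetric])
  have e3: "(p^h)^2 = (p^2)^h" by (simp add: power_mult[symmetric] mult.commute)
  have "(psi M w p h)^2 = (M-p^2)^2*(p^(2*w-h))^2 + 2*(M-p^2)*(1-M*p^2)*(p^(2*w-h)*p^h) + (1-M*p^2)^2*(p^h)^2"
    by (simp add: psi_def power2_eq_square algebra_simps)
  also have "\<dots> = (M-p^2)^2*p^(2*w)*(p^2)^(w-h) + 2*(M-p^2)*(1-M*p^2)*p^(2*w) + (1-M*p^2)^2*(p^2)^h"
    by (simp only: e1 e2 e3 mult.assoc)
  finally show ?thesis .
qed

lemma sum_psi_sq: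
  "(\<Sum>h\<le>w. (psi M w p h)^2) = (M-p^2)^2*p^(2*w)*(\<Sum>h\<le>w. (p^2)^h)
     + 2*(of_nat w+1)*(M-p^2)*(1-M*p^2)*p^(2*w) + (1-M*p^2)^2*(\<Sum>h\<le>w. (p^2)^h)"
proof -
  have r: "(\<Sum>h\<le>w. (p^2)^(w-h)) = (\<Sum>h\<le>w. (p^2)^h)"
    using sum.atLeastAtMost_rev[of "\<lambda>h. (p^2)^h" 0 w] by (simp add: atLeast0AtMost)
  have "(\<Sum>h\<le>w. (psi M w p h)^2) = (\<Sum>h\<le>w. (M-p^2)^2*p^(2*w)*(p^2)^(w-h) + 2*(M-p^2)*(1-M*p^2)*p^(2*w) + (1-M*p^2)^2*(p^2)^h)"
    by (intro sum.cong refl) (simp add: psi_sq)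
  also have "\<dots> = (M-p^2)^2*p^(2*w)*(\<Sum>h\<le>w. (p^2)^(w-h))
     + 2*(of_nat w+1)*(M-p^2)*(1-M*p^2)*p^(2*w) + (1-M*p^2)^2*(\<Sum>h\<le>w. (p^2)^h)"
    by (simp only: sum.distrib sum_distrib_left[symmetric] sum_constant card_atMost) (simp add: algebra_simps)
  finally show ?thesis by (simp only: r)
qed

definition Nh :: "complex \<Rightarrow> complex \<Rightarrow> nat \<Rightarrow> complex \<Rightarrow> complex" where
  "Nh L M w p = (\<Sum>h\<le>w. (psi M w p h)^2 / om L M w h)"

lemma Nh_split:
  assumes w: "w \<ge> 2" and L: "1+L \<noteq> 0" and M: "1+M \<noteq> 0"
  shows "Nh L M w p = (\<Sum>h\<le>w. (psi M w p h)^2) - L/(1+L)*(psi M w p 0)^2 - M/(1+M)*(psi M w p w)^2"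
proof -
  define f where "f h = (psi M w p h)^2" for h
  have pt: "f h / om L M w h = f h - ((if h = 0 then L/(1+L)*f 0 else 0) + (if h = w then M/(1+M)*f w else 0))"
    if "h \<le> w" for h
    using w L M by (auto simp: om_def field_simps)
  have "Nh L M w p = (\<Sum>h\<le>w. f h - ((if h = 0 then L/(1+L)*f 0 else 0) + (if h = w then M/(1+M)*f w else 0)))"
    unfolding Nh_def f_def[symmetric] by (intro sum.cong refl) (simp add: pt)
  also have "\<dots> = (\<Sum>h\<le>w. f h) - L/(1+L)*f 0 - M/(1+M)*f w"
    by (simp add: sum_subtractf sum.distrib)
  finally show ?thesis by (simp add: f_def)
qed

lemma norm_identity:
  assumes D: "poly (Dpoly L M w) p = 0" and p: "p \<noteq> 0" and P: "p^2 \<noteq> 1" and w: "w \<ge> 2"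
    and L: "1+L \<noteq> 0" and M: "1+M \<noteq> 0"
  shows "(L - p^2) * Nh L M w p = -(1 - M*p^2) * (p * Dd L M w p)"
proof -
  define P Q G W where "P = p^2" and "Q = p^(2*w)" and "G = (\<Sum>h\<le>w. (p^2)^h)" and "W = (of_nat w :: complex)"
  have h1: "(1-L*P)*(1-M*P) = (L-P)*(M-P)*Q" using D by (simp add: poly_Dpoly P_def Q_def)
  have h2: "(P-1)*G = P*Q - 1"
  proof -
    have a: "(1 - P)*G = 1 - P^Suc w" unfolding G_def P_def by (rule sum_gp_basic)
    have "P^w = Q" unfolding P_def Q_def by (simp add: power_mult)
    then have c: "P^Suc w = P*Q" by simp
    have b: "(1-P)*G = 1 - P*Q" using a unfolding c .
    from b show ?thesis by algebra
  qed
  have pD: "p * Dd L M w p = -2*L*P*(1-M*P) - 2*M*P*(1-L*P) + 2*P*(M-P+L-P)*Q - 2*W*(L-P)*(M-P)*Q"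
  proof -
    define q where "q = p^(2*w-1)"
    have e: "p^(2*w) = p*q" using w unfolding q_def by (metis Suc_diff_1 less_le_trans mult_pos_pos pos2 power_Suc zero_less_numeral)
    have f: "(of_nat (2*w) :: complex) = 2*W" by (simp add: W_def)
    show ?thesis unfolding Dd_def P_def Q_def e q_def[symmetric] f by algebra
  qed
  have ps0: "psi M w p 0 = (M-P)*Q + (1-M*P)" by (simp add: psi_def P_def Q_def)
  have psw: "(psi M w p w)^2 = (1+M)^2*(1-P)^2*Q"
  proof -
    have "psi M w p w = (1+M)*(1-P)*p^w" by (simp add: psi_def P_def algebra_simps mult_2)
    then show ?thesis by (simp add: power_mult_distrib Q_def power_mult[symmetric] mult.commute)
  qed
  have N: "(1+L)*(1+M)*Nh L M w p = (1+L)*(1+M)*((M-P)^2*Q*G + 2*(W+1)*(M-P)*(1-M*P)*Q + (1-M*P)^2*G)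
     - L*(1+M)*((M-P)*Q + (1-M*P))^2 - M*(1+L)*(1+M)^2*(1-P)^2*Q"
  proof -
    have S: "(\<Sum>h\<le>w. (psi M w p h)^2) = (M-P)^2*Q*G + 2*(W+1)*(M-P)*(1-M*P)*Q + (1-M*P)^2*G"
      unfolding P_def Q_def G_def W_def by (rule sum_psi_sq)
    have l1: "(1+L)*(L/(1+L)) = L" and m1: "(1+M)*(M/(1+M)) = M" using L M by simp_all
    have g0: "\<And>S a b u v. (1+L)*(1+M)*(S - u*a - v*b) = (1+L)*(1+M)*S - (1+M)*((1+L)*u)*a - (1+L)*((1+M)*v)*b"
      by algebra
    note g = g0[of _ "L/(1+L)" _ "M/(1+M)"]
    show ?thesis unfolding Nh_split[OF w L M] S ps0 psw g l1 m1 by algebra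
  qed
  have key: "(P-1)*((L-P)*((1+L)*(1+M)*((M-P)^2*Q*G + 2*(W+1)*(M-P)*(1-M*P)*Q + (1-M*P)^2*G)
     - L*(1+M)*((M-P)*Q + (1-M*P))^2 - M*(1+L)*(1+M)^2*(1-P)^2*Q)
     + (1+L)*(1+M)*(1-M*P)*(-2*L*P*(1-M*P) - 2*M*P*(1-L*P) + 2*P*(M-P+L-P)*Q - 2*W*(L-P)*(M-P)*Q)) = 0"
    using h1 h2 by algebra
  have "P - 1 \<noteq> 0" using P by (simp add: P_def)
  with key have "(L-P)*((1+L)*(1+M)*Nh L M w p) + (1+L)*(1+M)*(1-M*P)*(p * Dd L M w p) = 0"
    unfolding N pD by simp
  then have "(1+L)*(1+M)*((L-P)*Nh L M w p + (1-M*P)*(p * Dd L M w p)) = 0"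
    by (simp add: algebra_simps)
  then have "(L-P)*Nh L M w p + (1-M*P)*(p * Dd L M w p) = 0" using L M by simp
  then show ?thesis by (simp add: P_def algebra_simps)
qed


lemma om_real: assumes "lr \<ge> 0" "mr \<ge> 0"
  shows "om (of_real lr) (of_real mr) w h = of_real (if h = 0 then 1 + lr else if h = w then 1 + mr else 1)"
    and "(if h = 0 then 1 + lr else if h = w then 1 + mr else 1) > 0"
  using assms by (auto simp: om_def)

lemma Y_real:
  fixes v :: "nat \<Rightarrow> complex"
  assumes w: "w \<ge> 1"
  shows "Im (\<Sum>h\<le>w. cnj (v h) * ((if 0<h then v (h-1) else 0) + (if h<w then v (h+1) else 0))) = 0"
proof -
  obtain k where k: "w = Suc k" using w by (cases w) auto
  have "(\<Sum>h\<le>w. cnj (v h) * ((if 0<h then v (h-1) else 0) + (if h<w then v (h+1) else 0)))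
      = (\<Sum>h\<le>w. (if 0<h then cnj (v h) * v (h-1) else 0)) + (\<Sum>h\<le>w. (if h<w then cnj (v h) * v (h+1) else 0))"
    unfolding sum.distrib[symmetric] by (intro sum.cong refl) (simp add: distrib_left)
  also have "(\<Sum>h\<le>w. (if 0<h then cnj (v h) * v (h-1) else 0)) = (\<Sum>h\<le>k. cnj (v (Suc h)) * v h)"
    unfolding k sum.atMost_Suc_shift by simp
  also have "(\<Sum>h\<le>w. (if h<w then cnj (v h) * v (h+1) else 0)) = (\<Sum>h\<le>k. cnj (v h) * v (Suc h))"
    unfolding k sum.atMost_Suc by (simp add: k)
  also have "(\<Sum>h\<le>k. cnj (v (Suc h)) * v h) + (\<Sum>h\<le>k. cnj (v h) * v (Suc h))
      = (\<Sum>h\<le>k. cnj (v (Suc h)) * v h + cnj (cnj (v (Suc h)) * v h))"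
    by (simp add: sum.distrib mult.commute)
  finally show ?thesis by (simp add: Im_sum)
qed

lemma realness:
  assumes D: "poly (Dpoly (of_real lr) (of_real mr) w) p = 0" and p: "p \<noteq> 0" and P: "p^2 \<noteq> 1"
    and w: "w \<ge> 2" and lr: "lr \<ge> 0" and mr: "mr \<ge> 0"
  shows "Im p = 0 \<or> cmod p = 1"
proof -
  define L M where "L = complex_of_real lr" and "M = complex_of_real mr"
  define r where "r h = (if h = 0 then 1 + lr else if h = w then 1 + mr else 1)" for h
  define v where "v h = psi M w p h" for h
  define x where "x = (1+p^2)/p"
  have omr: "om L M w h = of_real (r h)" for h unfolding L_def M_def r_def using om_real[OF lr mr] by simp
  have rpos: "r h > 0" for h unfolding r_def using lr mr by auto
  define nb where "nb h = (if 0<h then v (h-1) else 0) + (if h<w then v (h+1) else 0)" for h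
  have eig: "x * v h = om L M w h * nb h" if "h \<le> w" for h
    using eigen[OF D[folded L_def M_def] p w that] unfolding x_def v_def nb_def by simp
  define S where "S = (\<Sum>h\<le>w. (cmod (v h))^2 / r h)"
  have vw: "v w \<noteq> 0"
  proof -
    have "v w = (1+M)*(1-p^2)*p^w" by (simp add: v_def psi_def algebra_simps mult_2)
    moreover have "1 + M \<noteq> 0"
    proof -
      have eq: "1 + M = of_real (1 + mr)" unfolding M_def by simp
      show ?thesis
      proof
        assume "1 + M = 0"
        then have "of_real (1+mr) = (0::complex)" using eq by simp
        then have "1+mr = 0" by (simp only: of_real_eq_0_iff)
        with mr show False by linarith
      qed
    qed
    ultimately show ?thesis using p P by auto
  qed
  have Spos: "S > 0"
  proof -
    have "(cmod (v w))^2 / r w \<le> S" unfolding S_def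
      by (rule member_le_sum) (use rpos in \<open>auto intro: divide_nonneg_pos\<close>)
    moreover have "(cmod (v w))^2 / r w > 0" using vw rpos[of w] by simp
    ultimately show ?thesis by linarith
  qed
  have "(\<Sum>h\<le>w. cnj (v h) * nb h) = (\<Sum>h\<le>w. x * (cnj (v h) * v h / om L M w h))"
  proof (intro sum.cong refl)
    fix h assume "h \<in> {..w}"
    then have "x * v h = om L M w h * nb h" by (intro eig) simp
    moreover have "om L M w h \<noteq> 0" using rpos[of h] by (simp add: omr)
    ultimately show "cnj (v h) * nb h = x * (cnj (v h) * v h / om L M w h)"
      by (simp add: field_simps)
  qed
  also have "\<dots> = x * of_real S"
    unfolding S_def sum_distrib_left[symmetric] of_real_sum
    by (intro arg_cong[where f="\<lambda>z. x * z"] sum.cong refl) (simp add: omr complex_norm_square[symmetric] mult.commute)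
  finally have Y: "(\<Sum>h\<le>w. cnj (v h) * nb h) = x * of_real S" .
  have "Im (x * of_real S) = 0" using Y_real[of w v] w unfolding Y[symmetric] nb_def by simp
  then have Imx: "Im x = 0" using Spos by simp
  have "Im x = Im p + Im (1/p)" unfolding x_def by (simp add: add_divide_distrib power2_eq_square)
  also have "Im (1/p) = - Im p / (cmod p)^2" by (simp add: Im_divide' )
  finally have "Im p * (1 - 1/(cmod p)^2) = 0" using Imx by (simp add: algebra_simps)
  then have "Im p = 0 \<or> (cmod p)^2 = 1" using p by (auto simp: field_simps)
  moreover have "cmod p \<ge> 0" by simp
  ultimately show ?thesis by (auto simp: power2_eq_1_iff)
qed

lemma onepM: "mr \<ge> 0 \<Longrightarrow> 1 + complex_of_real mr \<noteq> 0"
proof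
  assume mr: "mr \<ge> 0" and "1 + complex_of_real mr = 0"
  then have "complex_of_real (1+mr) = 0" by simp
  then have "1+mr = 0" by (simp only: of_real_eq_0_iff)
  with mr show False by linarith
qed

lemma psi_w: "psi M w p w = (1+M)*(1-p^2)*p^w" by (simp add: psi_def algebra_simps mult_2)

lemma Nh_nonzero:
  assumes D: "poly (Dpoly (of_real lr) (of_real mr) w) p = 0" and p: "p \<noteq> 0" and P: "p^2 \<noteq> 1"
    and w: "w \<ge> 2" and lr: "lr \<ge> 0" and mr: "mr \<ge> 0"
  shows "Nh (of_real lr) (of_real mr) w p \<noteq> 0"
proof -
  define L M where "L = complex_of_real lr" and "M = complex_of_real mr"
  define r where "r h = (if h = 0 then 1 + lr else if h = w then 1 + mr else 1)" for h
  define v where "v h = psi M w p h" for h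
  have omr: "om L M w h = of_real (r h)" for h unfolding L_def M_def r_def using om_real[OF lr mr] by simp
  have rpos: "r h > 0" for h unfolding r_def using lr mr by auto
  have vw: "v w \<noteq> 0" unfolding v_def psi_w using onepM[OF mr] p P by (simp add: M_def)
  define S where "S = (\<Sum>h\<le>w. (cmod (v h))^2 / r h)"
  have Spos: "S > 0"
  proof -
    have "(cmod (v w))^2 / r w \<le> S" unfolding S_def
      by (rule member_le_sum) (use rpos in \<open>auto intro: divide_nonneg_pos\<close>)
    moreover have "(cmod (v w))^2 / r w > 0" using vw rpos[of w] by simp
    ultimately show ?thesis by linarith
  qed
  from realness[OF D p P w lr mr] show ?thesis
  proof
    assume im: "Im p = 0"
    define t where "t h = Re (v h)" for h
    have pr: "p = of_real (Re p)" using im by (simp add: complex_eq_iff)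
    have vr: "v h = of_real (t h)" for h
    proof -
      have pR: "p \<in> \<real>" using im by (simp add: complex_is_Real_iff)
      have "v h \<in> \<real>" unfolding v_def psi_def M_def
        by (intro Reals_add Reals_mult Reals_diff Reals_power Reals_of_real pR Reals_1)
      then show ?thesis unfolding t_def by (simp add: complex_is_Real_iff complex_eq_iff)
    qed
    have tw: "t w \<noteq> 0" using vw vr[of w] by auto
    have "Nh L M w p = of_real (\<Sum>h\<le>w. (t h)^2 / r h)"
      unfolding Nh_def of_real_sum by (intro sum.cong refl) (simp add: v_def[symmetric] vr omr)
    moreover have "(\<Sum>h\<le>w. (t h)^2 / r h) > 0"
    proof -
      have "(t w)^2 / r w \<le> (\<Sum>h\<le>w. (t h)^2 / r h)"
        by (rule member_le_sum) (use rpos in \<open>auto intro: divide_nonneg_pos\<close>)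
      moreover have "(t w)^2 / r w > 0" using tw rpos[of w] by simp
      ultimately show ?thesis by linarith
    qed
    ultimately show ?thesis unfolding L_def M_def by (metis of_real_eq_0_iff less_irrefl)
  next
    assume c: "cmod p = 1"
    have cp: "cnj p = 1/p"
    proof -
      have "p * cnj p = 1" using complex_norm_square[of p] c by simp
      then show ?thesis using p by (simp add: field_simps)
    qed
    have reflp: "p^(2*w+2) * cnj (v h) = - v h" if h: "h \<le> w" for h
    proof -
      define a b where "a = p^(2*w-h)" and "b = p^h"
      have ab: "p^(2*w+2) = p^2*a*b" unfolding a_def b_def using h
        by (simp add: power_add[symmetric])
      have a0: "a \<noteq> 0" and b0: "b \<noteq> 0" using p by (simp_all add: a_def b_def)
      have c: "cnj (v h) = (M - 1/p^2)/a + (1 - M/p^2)/b"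
        unfolding v_def psi_def a_def b_def M_def by (simp add: cp power_one_over divide_simps)
      have vab: "v h = (M-p^2)*a + (1-M*p^2)*b" by (simp add: v_def psi_def a_def b_def)
      have "p^(2*w+2) * cnj (v h) = p^2*a*b*((M - 1/p^2)/a + (1 - M/p^2)/b)" by (simp only: ab c)
      also have "\<dots> = -((M-p^2)*a + (1-M*p^2)*b)" using a0 b0 p by (simp add: field_simps)
      also have "\<dots> = - v h" by (simp only: vab)
      finally show ?thesis .
    qed
    have "Nh L M w p = (- (p^(2*w+2))) * of_real S"
      unfolding Nh_def S_def of_real_sum sum_distrib_left
    proof (intro sum.cong refl)
      fix h assume "h \<in> {..w}"
      then have h: "h \<le> w" by simp
      have "(psi M w p h)^2 = - (p^(2*w+2) * cnj (v h)) * v h"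
        unfolding reflp[OF h] by (simp add: v_def power2_eq_square)
      also have "\<dots> = (- (p^(2*w+2))) * (v h * cnj (v h))" by (simp add: algebra_simps)
      finally show "(psi M w p h)^2 / om L M w h = (- (p^(2*w+2))) * of_real ((cmod (v h))^2 / r h)"
        by (simp add: omr complex_norm_square[symmetric])
    qed
    then show ?thesis using p Spos unfolding L_def M_def by simp
  qed
qed

lemma Dd_nonzero:
  assumes D: "poly (Dpoly (of_real lr) (of_real mr) w) p = 0" and P: "p^2 \<noteq> 1"
    and w: "w \<ge> 2" and lr: "lr \<ge> 0" and mr: "mr \<ge> 0" and lm: "lr * mr \<noteq> 1"
  shows "Dd (of_real lr) (of_real mr) w p \<noteq> 0"
proof
  assume Dd0: "Dd (of_real lr) (of_real mr) w p = 0"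
  have p: "p \<noteq> 0" using D Dpoly0[of w] w by (metis one_le_numeral order_trans zero_neq_one)
  have LP: "of_real lr - p^2 \<noteq> 0"
  proof
    assume "of_real lr - p^2 = 0"
    then have pl: "p^2 = of_real lr" by simp
    have "complex_of_real ((1 - lr*lr) * (1 - lr*mr)) = 0"
      using D by (simp add: poly_Dpoly pl mult.commute)
    then have "(1 - lr*lr) * (1 - lr*mr) = 0" by (simp only: of_real_eq_0_iff)
    then have "lr * lr = 1" using lm by auto
    then have "lr = 1" using lr by (metis abs_of_nonneg mult_1_left power2_eq_square real_sqrt_abs real_sqrt_one)
    then show False using P pl by simp
  qed
  have "(of_real lr - p^2) * Nh (of_real lr) (of_real mr) w p = 0"
    using norm_identity[OF D p P w onepM[OF lr] onepM[OF mr]] Dd0 by simp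
  then show False using LP Nh_nonzero[OF D p P w lr mr] by simp
qed


definition Pth :: "nat \<Rightarrow> nat \<Rightarrow> int \<Rightarrow> int list set" where
  "Pth n w h = {s. length s = n \<and> set s \<subseteq> {1, -1} \<and> height s n = h \<and>
                   (\<forall>i\<le>n. 0 \<le> height s i \<and> height s i \<le> int w)}"

definition Fr :: "real \<Rightarrow> real \<Rightarrow> nat \<Rightarrow> nat \<Rightarrow> int \<Rightarrow> real" where
  "Fr a b w n h = (\<Sum>s\<in>Pth n w h. a ^ u_count n s * b ^ v_count n w s)"

lemma Zpf_Fr: "Zpf n w a b = Fr a b w n 0"
  unfolding Zpf_def Fr_def loops_def Pth_def by simp

lemma finite_Pth: "finite (Pth n w h)"
proof -
  have "Pth n w h \<subseteq> {s. set s \<subseteq> {1, -1} \<and> length s = n}" by (auto simp: Pth_def)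
  moreover have "finite {s. set s \<subseteq> {1, -1::int} \<and> length s = n}"
    by (rule finite_lists_length_eq) simp
  ultimately show ?thesis by (rule finite_subset)
qed

lemma height_snoc1: "i \<le> length s \<Longrightarrow> height (s @ [d]) i = height s i"
  by (simp add: height_def)

lemma height_snoc2: "height (s @ [d]) (Suc (length s)) = height s (length s) + d"
  by (simp add: height_def)

lemma height_0[simp]: "height s 0 = 0" by (simp add: height_def)

lemma Fr_0: assumes "w \<ge> 1" shows "Fr a b w 0 h = (if h = 0 then 1 else 0)"
proof -
  have "Pth 0 w h = (if h = 0 then {[]} else {})" by (auto simp: Pth_def)
  moreover have "u_count 0 [] = 0" by (simp add: u_count_def)
  moreover have "v_count 0 w [] = 0" using assms by (simp add: v_count_def height_def)
  ultimately show ?thesis by (simp add: Fr_def)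
qed

lemma Pth_Suc:
  "Pth (Suc n) w h = (if 0 \<le> h \<and> h \<le> int w then (\<lambda>s. s @ [1]) ` Pth n w (h - 1) \<union> (\<lambda>s. s @ [-1]) ` Pth n w (h + 1) else {})"
proof (cases "0 \<le> h \<and> h \<le> int w")
  case False
  then show ?thesis by (auto simp: Pth_def)
next
  case True
  have "s' \<in> Pth (Suc n) w h \<longleftrightarrow> s' \<in> (\<lambda>s. s @ [1]) ` Pth n w (h - 1) \<union> (\<lambda>s. s @ [-1]) ` Pth n w (h + 1)" for s'
  proof
    assume s': "s' \<in> Pth (Suc n) w h"
    then have "length s' = Suc n" by (simp add: Pth_def)
    then obtain s d where sd: "s' = s @ [d]" and ls: "length s = n"
      by (metis length_Suc_conv_rev rev_eq_Cons_iff)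
    have d: "d = 1 \<or> d = -1" using s' sd by (auto simp: Pth_def)
    have hs: "height s n + d = h" using s' sd ls height_snoc2[of s d] by (simp add: Pth_def)
    have s: "set s \<subseteq> {1,-1} \<and> (\<forall>i\<le>n. 0 \<le> height s i \<and> height s i \<le> int w)"
    proof (intro conjI allI impI)
      show "set s \<subseteq> {1,-1}" using s' sd by (auto simp: Pth_def)
      fix i assume i: "i \<le> n"
      then have e: "height s' i = height s i" using sd ls height_snoc1[of i s d] by simp
      have "0 \<le> height s' i \<and> height s' i \<le> int w" using s' i by (auto simp: Pth_def)
      then show "0 \<le> height s i" "height s i \<le> int w" using e by auto
    qed
    show "s' \<in> (\<lambda>s. s @ [1]) ` Pth n w (h - 1) \<union> (\<lambda>s. s @ [-1]) ` Pth n w (h + 1)"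
      using d
    proof
      assume "d = 1"
      then have "s \<in> Pth n w (h - 1)" using s ls hs by (auto simp: Pth_def)
      then show ?thesis using sd \<open>d = 1\<close> by auto
    next
      assume "d = -1"
      then have "s \<in> Pth n w (h + 1)" using s ls hs by (auto simp: Pth_def)
      then show ?thesis using sd \<open>d = -1\<close> by auto
    qed
  next
    assume "s' \<in> (\<lambda>s. s @ [1]) ` Pth n w (h - 1) \<union> (\<lambda>s. s @ [-1]) ` Pth n w (h + 1)"
    then obtain s d where sd: "s' = s @ [d]" and d: "d = 1 \<or> d = -1" and s: "s \<in> Pth n w (h - d)"
      by auto
    have ls: "length s = n" using s by (simp add: Pth_def)
    have hl: "height s' (Suc n) = h" using s sd ls height_snoc2[of s d] by (simp add: Pth_def)
    have hi: "0 \<le> height s' i \<and> height s' i \<le> int w" if "i \<le> Suc n" for i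
    proof (cases "i = Suc n")
      case True then show ?thesis using hl \<open>0 \<le> h \<and> h \<le> int w\<close> by simp
    next
      case False then have "i \<le> n" using that by simp
      then show ?thesis using s sd ls height_snoc1[of i s d] by (auto simp: Pth_def)
    qed
    show "s' \<in> Pth (Suc n) w h" using s sd d ls hl hi by (auto simp: Pth_def)
  qed
  then show ?thesis using True by auto
qed

lemma counts_snoc:
  assumes ls: "length s = n"
  shows "u_count (Suc n) (s @ [d]) = u_count n s + (if height s n + d = 0 then 1 else 0)"
    and "v_count (Suc n) w (s @ [d]) = v_count n w s + (if height s n + d = int w then 1 else 0)"
proof -
  have "{i \<in> {1..Suc n}. height (s @ [d]) i = 0} = {i \<in> {1..n}. height s i = 0} \<union> (if height s n + d = 0 then {Suc n} else {})"
    using ls height_snoc1[of _ s d] height_snoc2[of s d] by (auto simp: le_Suc_eq)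
  then show "u_count (Suc n) (s @ [d]) = u_count n s + (if height s n + d = 0 then 1 else 0)"
    unfolding u_count_def by (simp add: card_Un_disjoint)
  have "{i \<in> {0..Suc n}. height (s @ [d]) i = int w} = {i \<in> {0..n}. height s i = int w} \<union> (if height s n + d = int w then {Suc n} else {})"
    using ls height_snoc1[of _ s d] height_snoc2[of s d] by (auto simp: le_Suc_eq)
  then show "v_count (Suc n) w (s @ [d]) = v_count n w s + (if height s n + d = int w then 1 else 0)"
    unfolding v_count_def by (simp add: card_Un_disjoint)
qed

lemma Fr_Suc:
  "Fr a b w (Suc n) h = (if 0 \<le> h \<and> h \<le> int w then
      (if h = 0 then a else 1) * (if h = int w then b else 1) * (Fr a b w n (h - 1) + Fr a b w n (h + 1)) else 0)"
proof (cases "0 \<le> h \<and> h \<le> int w")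
  case False then show ?thesis by (simp only: Fr_def Pth_Suc if_False sum.empty)
next
  case True
  define c where "c = (if h = 0 then a else 1) * (if h = int w then b else 1)"
  have wt: "a ^ u_count (Suc n) (s @ [d]) * b ^ v_count (Suc n) w (s @ [d]) = c * (a ^ u_count n s * b ^ v_count n w s)"
    if "s \<in> Pth n w (h - d)" for s d
  proof -
    have ls: "length s = n" and hs: "height s n + d = h" using that by (auto simp: Pth_def)
    show ?thesis unfolding counts_snoc[OF ls] hs c_def by (simp add: power_add)
  qed
  have disj: "(\<lambda>s. s @ [1]) ` Pth n w (h - 1) \<inter> (\<lambda>s. s @ [-1]) ` Pth n w (h + 1) = {}" by auto
  have "Fr a b w (Suc n) h = (\<Sum>s\<in>(\<lambda>s. s @ [1]) ` Pth n w (h - 1). a ^ u_count (Suc n) s * b ^ v_count (Suc n) w s)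
      + (\<Sum>s\<in>(\<lambda>s. s @ [-1]) ` Pth n w (h + 1). a ^ u_count (Suc n) s * b ^ v_count (Suc n) w s)"
    unfolding Fr_def Pth_Suc using True disj by (simp add: sum.union_disjoint finite_Pth)
  also have "\<dots> = (\<Sum>s\<in>Pth n w (h - 1). c * (a ^ u_count n s * b ^ v_count n w s))
      + (\<Sum>s\<in>Pth n w (h + 1). c * (a ^ u_count n s * b ^ v_count n w s))"
    by (simp add: sum.reindex inj_on_def wt[of _ 1, simplified] wt[of _ "-1", simplified])
  also have "\<dots> = c * (Fr a b w n (h - 1) + Fr a b w n (h + 1))"
    by (simp add: Fr_def sum_distrib_left distrib_left)
  finally show ?thesis using True by (simp add: c_def)
qed


lemma Dd_pm1: assumes P: "p^2 = 1" and w: "w \<ge> 1"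
  shows "Dd L M w p = p*(4*L*M - 4 - 2*of_nat w*(L-1)*(M-1))"
proof -
  have Q: "p^(2*w) = 1" using P by (simp add: power_mult)
  have p0: "p \<noteq> 0" using P by auto
  have "p * p^(2*w-1) = 1" using Q w by (metis Suc_diff_1 less_le_trans mult_pos_pos pos2 power_Suc zero_less_one)
  then have q: "p^(2*w-1) = p" using P p0 by (metis mult_cancel_left power2_eq_square)
  show ?thesis unfolding Dd_def Q q P by (simp add: algebra_simps)
qed

lemma sqfree:
  assumes lr: "lr \<ge> 0" and mr: "mr \<ge> 0" and lm: "lr * mr \<noteq> 1" and w: "w \<ge> 2"
    and big: "real w * (lr-1) * (mr-1) \<noteq> 2 * (lr*mr - 1)"
  shows "rsquarefree (Dpoly (of_real lr) (of_real mr) w)"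
  unfolding rsquarefree_roots
proof (intro allI notI)
  fix a assume a: "poly (Dpoly (of_real lr) (of_real mr) w) a = 0 \<and> poly (pderiv (Dpoly (of_real lr) (of_real mr) w)) a = 0"
  then have D: "poly (Dpoly (of_real lr) (of_real mr) w) a = 0" and Dd0: "Dd (of_real lr) (of_real mr) w a = 0"
    using poly_pderiv_Dpoly[of w] w by auto
  show False
  proof (cases "a^2 = 1")
    case True
    define c where "c = 4*lr*mr - 4 - 2*real w*(lr-1)*(mr-1)"
    have e: "Dd (of_real lr) (of_real mr) w a = a * of_real c"
      using Dd_pm1[OF True, of w] w by (simp add: c_def)
    have "a * of_real c = 0" using e Dd0 by simp
    moreover have "a \<noteq> 0" using True by auto
    moreover have "c \<noteq> 0" using big by (simp add: c_def algebra_simps)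
    ultimately show False by (simp only: mult_eq_0_iff of_real_eq_0_iff) simp
  next
    case False
    then show False using Dd_nonzero[OF D False w lr mr lm] Dd0 by simp
  qed
qed

lemma nondeg:
  assumes D: "poly (Dpoly (of_real lr) (of_real mr) w) p = 0" and P: "p^2 \<noteq> 1"
    and lr: "lr \<ge> 0" and mr: "mr \<ge> 0" and lm: "lr * mr \<noteq> 1" and w: "w \<ge> 1"
  shows "of_real lr - p^2 \<noteq> 0" "1 - of_real lr * p^2 \<noteq> 0" "p \<noteq> 0"
proof -
  show p: "p \<noteq> 0" using D Dpoly0[OF w] by auto
  show LP: "of_real lr - p^2 \<noteq> 0"
  proof
    assume "of_real lr - p^2 = 0"
    then have pl: "p^2 = of_real lr" by simp
    have "complex_of_real ((1 - lr*lr) * (1 - lr*mr)) = 0"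
      using D by (simp add: poly_Dpoly pl mult.commute)
    then have "(1 - lr*lr) * (1 - lr*mr) = 0" by (simp only: of_real_eq_0_iff)
    then have "lr * lr = 1" using lm by auto
    then have "lr = 1" using lr by (metis abs_of_nonneg mult_1_left power2_eq_square real_sqrt_abs real_sqrt_one)
    then show False using P pl by simp
  qed
  show "1 - of_real lr * p^2 \<noteq> 0"
  proof
    assume h: "1 - of_real lr * p^2 = 0"
    then have "(of_real lr - p^2) * (of_real mr - p^2) * p^(2*w) = 0" using D by (simp add: poly_Dpoly)
    moreover have "of_real mr - p^2 \<noteq> 0"
    proof
      assume "of_real mr - p^2 = 0"
      then have "1 - of_real lr * of_real mr = (0::complex)" using h by simp
      then have "complex_of_real (1 - lr * mr) = 0" by simp
      then show False using lm by (simp only: of_real_eq_0_iff)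
    qed
    ultimately show False using LP p by simp
  qed
qed

lemma Dpoly_sym: "poly (Dpoly L M w) p = poly (Dpoly M L w) p"
  by (simp add: poly_Dpoly algebra_simps)


lemma Fr_out: "h < 0 \<or> h > int w \<Longrightarrow> Fr a b w n h = 0"
proof -
  assume h: "h < 0 \<or> h > int w"
  have "Pth n w h = {}" using h by (auto simp: Pth_def)
  then show ?thesis by (simp add: Fr_def)
qed

lemma F_eq_H:
  assumes w: "w \<ge> 2" and sq: "rsquarefree (Dpoly (of_real lr) (of_real mr) w)"
  shows "h \<le> w \<Longrightarrow> complex_of_real (Fr (1+lr) (1+mr) w n (int h)) = Hs (of_real lr) (of_real mr) w n h"
proof (induction n arbitrary: h)
  case 0
  have w1: "w \<ge> 1" using w by simp
  show ?case using Fr_0[OF w1] Hs_base[OF sq w1 "0.prems"] by simp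
next
  case (Suc n)
  note h = Suc.prems
  define c where "c = (if int h = 0 then 1+lr else 1) * (if int h = int w then 1+mr else 1)"
  have om: "om (of_real lr) (of_real mr) w h = of_real c" unfolding c_def om_def using w by auto
  have l: "complex_of_real (Fr (1+lr) (1+mr) w n (int h - 1)) = (if 0<h then Hs (of_real lr) (of_real mr) w n (h-1) else 0)"
  proof (cases "0 < h")
    case True
    then have "int h - 1 = int (h-1)" by simp
    then show ?thesis using True Suc.IH[of "h-1"] h by simp
  next
    case False then show ?thesis by (simp add: Fr_out)
  qed
  have r: "complex_of_real (Fr (1+lr) (1+mr) w n (int h + 1)) = (if h<w then Hs (of_real lr) (of_real mr) w n (h+1) else 0)"
  proof (cases "h < w")
    case True
    then have "int h + 1 = int (h+1)" by simp
    then show ?thesis using True Suc.IH[of "h+1"] h by (simp add: add.commute)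
  next
    case False then show ?thesis using h by (simp add: Fr_out)
  qed
  have "complex_of_real (Fr (1+lr) (1+mr) w (Suc n) (int h)) = of_real c * (complex_of_real (Fr (1+lr) (1+mr) w n (int h - 1)) + complex_of_real (Fr (1+lr) (1+mr) w n (int h + 1)))"
    unfolding Fr_Suc c_def using h by simp
  also have "\<dots> = Hs (of_real lr) (of_real mr) w (Suc n) h"
    unfolding l r Hs_step[OF w h] om ..
  finally show ?case .
qed

lemma eps_ident:
  fixes l m :: real
  defines "L \<equiv> (complex_of_real l)^2" and "M \<equiv> (complex_of_real m)^2"
  assumes D: "poly (Dpoly L M w) p = 0" and p: "p \<noteq> 0" and w: "w \<ge> 1"
    and n1: "L - p^2 \<noteq> 0" and n2: "M - p^2 \<noteq> 0" and n3: "1 - L*p^2 \<noteq> 0" and n4: "1 - M*p^2 \<noteq> 0"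
  shows "1 / (of_nat w + epsk l m p) = -2*(1-L*p^2)*(1-M*p^2) / (p * Dd L M w p)"
proof -
  define P Q W E where "P = p^2" and "Q = p^(2*w)" and "W = (of_nat w :: complex)" and "E = epsk l m p"
  have hD: "(1-L*P)*(1-M*P) = (L-P)*(M-P)*Q" using D by (simp add: poly_Dpoly P_def Q_def)
  have pD: "p * Dd L M w p = -2*L*P*(1-M*P) - 2*M*P*(1-L*P) + 2*P*(M-P+L-P)*Q - 2*W*(L-P)*(M-P)*Q"
  proof -
    define q where "q = p^(2*w-1)"
    have e: "p^(2*w) = p*q" using w unfolding q_def by (metis Suc_diff_1 less_le_trans mult_pos_pos pos2 power_Suc zero_less_one)
    have f: "(of_nat (2*w) :: complex) = 2*W" by (simp add: W_def)
    show ?thesis unfolding Dd_def P_def Q_def e q_def[symmetric] f by algebra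
  qed
  have e1: "E * ((1-L*P)*(L-P)*(1-M*P)*(M-P)) = P*(L*(L-P)*(1-M*P)*(M-P) - (1-L*P)*(1-M*P)*(M-P)
      + M*(1-L*P)*(L-P)*(M-P) - (1-L*P)*(L-P)*(1-M*P))"
  proof -
    define a b c d where "a = L/(1-L*P)" and "b = 1/(L-P)" and "c = M/(1-M*P)" and "d = 1/(M-P)"
    have E: "E = P*(a - b + c - d)"
      unfolding E_def epsk_def L_def[symmetric] M_def[symmetric] P_def[symmetric] a_def b_def c_def d_def ..
    have ha: "a*(1-L*P) = L" and hb: "b*(L-P) = 1" and hc: "c*(1-M*P) = M" and hd: "d*(M-P) = 1"
      using n1 n2 n3 n4 by (simp_all add: a_def b_def c_def d_def P_def)
    have "P * (a - b + c - d) * ((1-L*P)*(L-P)*(1-M*P)*(M-P)) =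
      P*((a*(1-L*P))*((L-P)*(1-M*P)*(M-P)) - (b*(L-P))*((1-L*P)*(1-M*P)*(M-P))
        + (c*(1-M*P))*((1-L*P)*(L-P)*(M-P)) - (d*(M-P))*((1-L*P)*(L-P)*(1-M*P)))"
      by (simp add: algebra_simps)
    then show ?thesis unfolding E ha hb hc hd by (simp add: algebra_simps)
  qed
  have key: "((1-L*P)*(L-P)*(1-M*P)*(M-P)) * ((W + E) * (2*(1-L*P)*(1-M*P)) + p * Dd L M w p) = 0"
    unfolding pD using e1 hD by algebra
  have K: "(1-L*P)*(L-P)*(1-M*P)*(M-P) \<noteq> 0" using n1 n2 n3 n4 by (simp add: P_def)
  have X: "(W + E) * (2*(1-L*P)*(1-M*P)) = - (p * Dd L M w p)" using key K
    by (simp add: eq_neg_iff_add_eq_0)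
  have Y: "2*(1-L*P)*(1-M*P) \<noteq> 0" using n3 n4 by (simp add: P_def)
  have "W + E = (W + E) * (2*(1-L*P)*(1-M*P)) / (2*(1-L*P)*(1-M*P))" using Y by simp
  also have "\<dots> = - (p * Dd L M w p) / (2*(1-L*P)*(1-M*P))" by (simp only: X)
  finally have "W + E = - (p * Dd L M w p) / (2*(1-L*P)*(1-M*P))" .
  then have "1 / (W + E) = 1 / (- (p * Dd L M w p) / (2*(1-L*P)*(1-M*P)))" by simp
  also have "\<dots> = -2*(1-L*P)*(1-M*P) / (p * Dd L M w p)" by (simp add: divide_simps) (simp add: algebra_simps)
  finally show ?thesis unfolding W_def E_def P_def .
qed


lemma final_alg:
  fixes A B E K u X C :: complex
  shows "A \<noteq> 0 \<Longrightarrow> B \<noteq> 0 \<Longrightarrow> E \<noteq> 0 \<Longrightarrow>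
    K / 4 * (u^2/(B*A) * X * (-2*A*C/E)) = -(1/2)*u*(K*u*C/B)*X/E"
  by (simp add: field_simps power2_eq_square)

theorem mainTheorem5:
  fixes l m :: real
  assumes "l \<ge> 0" and "m \<ge> 0" and "l * m \<noteq> 1"
  shows "\<exists>W. \<forall>w\<ge>W. \<forall>n::nat.
     complex_of_real (Zpf n w (1 + l^2) (1 + m^2)) =
       of_real (1 + l^2) / 4 *
       (\<Sum>p\<in>{p. Dw l m w p = 0 \<and> p \<noteq> 1 \<and> p \<noteq> -1}.
          (1 - p^2)^2 / (((of_real l)^2 - p^2) * (1 - (of_real l)^2 * p^2))
          * ((1 + p^2) / p) ^ n * (1 / (of_nat w + epsk l m p)))"
proof -
  define lr mr where "lr = l^2" and "mr = m^2"
  have lr: "lr \<ge> 0" and mr: "mr \<ge> 0" by (simp_all add: lr_def mr_def)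
  have lm: "lr * mr \<noteq> 1"
  proof
    assume "lr * mr = 1"
    then have "(l*m)^2 = 1" by (simp add: lr_def mr_def power_mult_distrib)
    moreover have "l*m \<ge> 0" using assms(1,2) by simp
    ultimately have "l*m = 1" using power2_eq_1_iff[of "l*m"] by auto
    then show False using assms(3) by simp
  qed
  have ml: "mr * lr \<noteq> 1" using lm by (simp add: mult.commute)
  define c where "c = (lr-1)*(mr-1)"
  define W0 where "W0 = nat \<lceil>2*\<bar>lr*mr-1\<bar> / \<bar>c\<bar>\<rceil> + 3"
  show ?thesis
  proof (intro exI allI impI)
    fix w n assume wW: "W0 \<le> w"
    have w: "w \<ge> 2" using wW by (simp add: W0_def)
    have w1: "w \<ge> 1" using w by simp
    have big: "real w * (lr-1) * (mr-1) \<noteq> 2 * (lr*mr - 1)"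
    proof (cases "c = 0")
      case True
      have "real w * (lr-1)*(mr-1) = 0" using True by (simp add: c_def mult.assoc)
      moreover have "2*(lr*mr-1) \<noteq> 0" using lm by simp
      ultimately show ?thesis by linarith
    next
      case False
      have "real w \<ge> real W0" using wW by simp
      moreover have "real W0 > 2*\<bar>lr*mr-1\<bar> / \<bar>c\<bar>" unfolding W0_def
        using real_nat_ceiling_ge[of "2*\<bar>lr*mr-1\<bar> / \<bar>c\<bar>"] by (simp only: of_nat_add of_nat_numeral)
      ultimately have "real w > 2*\<bar>lr*mr-1\<bar> / \<bar>c\<bar>" by linarith
      then have "real w * \<bar>c\<bar> > 2*\<bar>lr*mr-1\<bar>" using False by (simp add: field_simps)
      moreover have "\<bar>real w * c\<bar> = real w * \<bar>c\<bar>" by (simp add: abs_mult)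
      moreover have "\<bar>2*(lr*mr-1)\<bar> = 2*\<bar>lr*mr-1\<bar>" by (simp only: abs_mult abs_numeral)
      ultimately have "\<bar>real w * c\<bar> \<noteq> \<bar>2*(lr*mr-1)\<bar>" by linarith
      then show ?thesis by (auto simp: c_def mult.assoc)
    qed
    have sq: "rsquarefree (Dpoly (of_real lr) (of_real mr) w)" by (rule sqfree[OF lr mr lm w big])
    define L M where "L = (complex_of_real l)^2" and "M = (complex_of_real m)^2"
    have Lr: "of_real lr = L" and Mr: "of_real mr = M" by (simp_all add: L_def M_def lr_def mr_def)
    define R where "R = {p. poly (Dpoly L M w) p = 0}"
    define g where "g p = -(1/2)*(1-p^2)*psi M w p 0*((1+p^2)/p)^n/(p*Dd L M w p)" for p
    have lhs: "complex_of_real (Zpf n w (1 + l^2) (1 + m^2)) = Hs L M w n 0"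
      using F_eq_H[OF w sq, of 0 n] unfolding Zpf_Fr Lr Mr by (simp add: lr_def mr_def)
    have Hs: "Hs L M w n 0 = (\<Sum>p\<in>R. g p)" unfolding Hs_def R_def g_def ..
    have set: "{p. Dw l m w p = 0 \<and> p \<noteq> 1 \<and> p \<noteq> -1} = {p\<in>R. p^2 \<noteq> 1}"
      by (auto simp: R_def Dw_def poly_Dpoly L_def M_def power2_eq_1_iff)
    have finR: "finite R" unfolding R_def using sq unfolding Lr Mr by (simp add: rsquarefree_def poly_roots_finite)
    have sum_eq: "(\<Sum>p\<in>{p\<in>R. p^2 \<noteq> 1}. g p) = (\<Sum>p\<in>R. g p)"
      by (rule sum.mono_neutral_left[OF finR]) (auto simp: g_def)
    have pt: "of_real (1 + l^2) / 4 * ((1 - p^2)^2 / (((of_real l)^2 - p^2) * (1 - (of_real l)^2 * p^2))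
          * ((1 + p^2) / p) ^ n * (1 / (of_nat w + epsk l m p))) = g p" if p: "p \<in> {p\<in>R. p^2 \<noteq> 1}" for p
    proof -
      have D: "poly (Dpoly L M w) p = 0" and P: "p^2 \<noteq> 1" using p by (auto simp: R_def)
      have D': "poly (Dpoly (of_real lr) (of_real mr) w) p = 0" using D by (simp add: Lr Mr)
      have D'': "poly (Dpoly (of_real mr) (of_real lr) w) p = 0" using D' Dpoly_sym by metis
      note nd1 = nondeg[OF D' P lr mr lm w1, unfolded Lr]
      note nd2 = nondeg[OF D'' P mr lr ml w1, unfolded Mr]
      have Dd: "Dd L M w p \<noteq> 0" using Dd_nonzero[OF D' P w lr mr lm] by (simp add: Lr Mr)
      have e: "1 / (of_nat w + epsk l m p) = -2*(1-L*p^2)*(1-M*p^2) / (p * Dd L M w p)"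
        using eps_ident[of l m w p] D nd1 nd2 w1 unfolding L_def M_def by simp
      have ps: "psi M w p 0 * (L - p^2) = (1+L)*(1-p^2)*(1-M*p^2)"
      proof -
        have h: "(1-L*p^2)*(1-M*p^2) = (L-p^2)*(M-p^2)*p^(2*w)" using D by (simp add: poly_Dpoly)
        have "psi M w p 0 * (L - p^2) = (M-p^2)*p^(2*w)*(L-p^2) + (1-M*p^2)*(L-p^2)" by (simp add: psi_def algebra_simps)
        also have "\<dots> = (1-L*p^2)*(1-M*p^2) + (1-M*p^2)*(L-p^2)" using h by (simp add: algebra_simps)
        also have "\<dots> = (1+L)*(1-p^2)*(1-M*p^2)" by (simp add: algebra_simps)
        finally show ?thesis .
      qed
      have ps': "psi M w p 0 = (1+L)*(1-p^2)*(1-M*p^2) / (L - p^2)" using ps nd1(1) by (simp add: field_simps)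
      have ofr: "complex_of_real (1 + l^2) = 1 + L" by (simp add: L_def)
      have E0: "p * Dd L M w p \<noteq> 0" using Dd nd1(3) by simp
      show ?thesis unfolding e ofr L_def[symmetric] g_def ps'
        by (rule final_alg[OF nd1(2) nd1(1) E0])
    qed
    show "complex_of_real (Zpf n w (1 + l^2) (1 + m^2)) =
       of_real (1 + l^2) / 4 *
       (\<Sum>p\<in>{p. Dw l m w p = 0 \<and> p \<noteq> 1 \<and> p \<noteq> -1}.
          (1 - p^2)^2 / (((of_real l)^2 - p^2) * (1 - (of_real l)^2 * p^2))
          * ((1 + p^2) / p) ^ n * (1 / (of_nat w + epsk l m p)))"
      unfolding lhs Hs set sum_distrib_left sum_eq[symmetric] by (rule sum.cong[OF refl pt[symmetric]])
  qed
qed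


end
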